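(* Let $n\in\mathbb N$. Then $\delta(m)<\delta(n)$ for every $m\in\mathbb N$ with $m<n$ if and only if $n=1$ or $n$ is a prime number.
   Context: $\mathbb N$ is the set of positive integers. For $n\in\mathbb N$, $\delta(n)=\min\{\,r+s : r,s\in\mathbb N,\ r\le s,\ rs=n\,\}$, i.e. the minimum of $d+n/d$ over positive divisors $d$ of $n$. *)

theory Defs
  imports Main "HOL-Computational_Algebra.Primes"
begin

definition delta :: "nat \<Rightarrow> nat" where
  "delta n = Min {r + s | r s. 0 < r \<and> 0 < s \<and> r \<le> s \<and> r * s = n}"

end

theory Submission
  imports Defs Complex_Main "HOL-Computational_Algebra.Primes"
begin

lemma pow8_aux: "(12::nat)^8 * A \<le> 13^8 * B \<Longrightarrow> A \<le> 2*B" by simp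

lemma pow8_step:
  fixes t :: nat assumes "t \<ge> 11" shows "(t+2)^8 \<le> 2*(t+1)^8"
proof -
  have "12*(t+2) \<le> 13*(t+1)" using assms by simp
  hence "(12*(t+2))^8 \<le> (13*(t+1))^8" by (rule power_mono) simp
  hence "12^8*(t+2)^8 \<le> 13^8*(t+1)^8" by (simp only: power_mult_distrib)
  thus ?thesis by (rule pow8_aux)
qed

lemma pow8_bound:
  fixes t :: nat assumes "t \<ge> 64" shows "(t+1)^8 \<le> 2^t"
  using assms
proof (induction t rule: dec_induct)
  case base then show ?case by simp
next
  case (step t)
  have "(Suc t + 1)^8 = (t+2)^8" by simp
  also have "\<dots> \<le> 2*(t+1)^8" using step by (intro pow8_step) simp
  also have "\<dots> \<le> 2*2^t" using step by simp
  finally show ?case by simp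
qed

lemma numerics:
  fixes t n :: nat
  assumes t: "t \<ge> 64" and a: "t*t \<le> 2*n" and b: "2*n < (t+1)*(t+1)"
  shows "(2*n+1)^24 * (2*n)^(24*t) < 4^(8*n)"
proof -
  have c: "2*n+1 \<le> (t+1)^2" using b by (simp add: power2_eq_square)
  have d: "2*n \<le> (t+1)^2" using b by (simp add: power2_eq_square)
  have "(2*n+1)^24 * (2*n)^(24*t) \<le> ((t+1)^2)^24 * ((t+1)^2)^(24*t)"
    by (intro mult_le_mono power_mono c d) simp_all
  also have "\<dots> = ((t+1)^8)^(6*t+6)"
    by (simp add: power_mult[symmetric] power_add[symmetric] algebra_simps)
  also have "\<dots> \<le> (2^t)^(6*t+6)" by (intro power_mono pow8_bound t) simp
  also have "\<dots> = 2^(6*t*t+6*t)" by (simp add: power_mult[symmetric] algebra_simps)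
  also have "\<dots> < 2^(16*n)"
  proof (rule power_strict_increasing)
    have "6*t < 2*(t*t)" using t by (simp add: mult_less_cancel1)  
    thus "6*t*t+6*t < 16*n" using a by linarith
  qed simp
  also have "\<dots> = (2^2)^(8*n)" unfolding power_mult[symmetric] by simp
  also have "\<dots> = 4^(8*n)" by simp
  finally show ?thesis .
qed

lemma central_lower: "4^n \<le> (2*n+1) * ((2*n) choose n)"
proof -
  have "4^n = (2::nat)^(2*n)" by (simp add: power_mult)
  also have "\<dots> = (\<Sum>k\<le>2*n. (2*n) choose k)" by (simp add: choose_row_sum)
  also have "\<dots> \<le> (\<Sum>k\<le>2*n. (2*n) choose n)" by (intro sum_mono binomial_maximum')
  also have "\<dots> = (2*n+1) * ((2*n) choose n)" by simp
  finally show ?thesis .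
qed

lemma binom_odd_upper: "(2*m+1) choose m \<le> 4^m"
proof -
  have sym: "(2*m+1) choose (m+1) = (2*m+1) choose m"
    using binomial_symmetric[of "m+1" "2*m+1"] by simp
  have "2*((2*m+1) choose m) = (\<Sum>k\<in>{m,m+1}. (2*m+1) choose k)" using sym by simp
  also have "\<dots> \<le> (\<Sum>k\<le>2*m+1. (2*m+1) choose k)" by (intro sum_mono2) auto
  also have "\<dots> = 2^(2*m+1)" by (rule choose_row_sum)
  also have "\<dots> = 2*4^m" by (simp add: power_mult)
  finally show ?thesis by simp
qed

lemma sqrt_exists: "\<exists>t::nat. t*t \<le> N \<and> N < (t+1)*(t+1)"
proof (induction N)
  case 0 then show ?case by (intro exI[of _ 0]) simp
next
  case (Suc N)
  then obtain t where t: "t*t \<le> N" "N < (t+1)*(t+1)" by blast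
  show ?case
  proof (cases "Suc N < (t+1)*(t+1)")
    case True then show ?thesis using t by (intro exI[of _ t]) simp
  next
    case False
    hence "Suc N = (t+1)*(t+1)" using t by simp
    then show ?thesis by (intro exI[of _ "t+1"]) simp
  qed
qed

lemma div_Suc_eq: "Suc m div (d::nat) = m div d + (if d dvd Suc m then 1 else 0)"
  by (simp add: div_Suc dvd_eq_mod_eq_0)

lemma mult_Suc_sum:
  fixes p m k :: nat
  assumes p: "prime p" and lt: "Suc m < p^k"
  shows "multiplicity p (Suc m) = (\<Sum>i\<in>{1..k}. if p^i dvd Suc m then 1 else 0)"
proof -
  let ?j = "multiplicity p (Suc m)"
  have nu: "\<not> is_unit p" using p by (simp add: prime_nat_iff)
  have "p^?j dvd Suc m" by (rule multiplicity_dvd)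
  hence "p^?j \<le> Suc m" by (rule dvd_imp_le) simp
  hence "p^?j < p^k" using lt by simp
  hence jk: "?j < k" using power_less_imp_less_exp[of p ?j k] p prime_gt_1_nat by blast
  have iff: "\<And>i. p^i dvd Suc m \<longleftrightarrow> i \<le> ?j"
    using power_dvd_iff_le_multiplicity[of "Suc m" p] nu by simp
  have seteq: "{i\<in>{1..k}. p^i dvd Suc m} = {1..?j}"
    using jk by (auto simp: iff)
  have "(\<Sum>i\<in>{1..k}. if p^i dvd Suc m then 1 else 0) = (\<Sum>i\<in>{i\<in>{1..k}. p^i dvd Suc m}. (1::nat))"
    by (rule sum.inter_filter[symmetric]) simp
  hence "(\<Sum>i\<in>{1..k}. if p^i dvd Suc m then 1 else 0) = card {1..?j}"
    by (simp only: seteq) simp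
  thus ?thesis by simp
qed

lemma legendre:
  fixes p n k :: nat
  assumes p: "prime p"
  shows "n < p^k \<Longrightarrow> multiplicity p (fact n :: nat) = (\<Sum>i\<in>{1..k}. n div p^i)"
proof (induction n)
  case 0 then show ?case by simp
next
  case (Suc n)
  have "multiplicity p (fact (Suc n) :: nat) = multiplicity p (Suc n * fact n)" by simp
  also have "\<dots> = multiplicity p (Suc n) + multiplicity p (fact n :: nat)"
    using p by (intro prime_elem_multiplicity_mult_distrib) auto
  also have "\<dots> = (\<Sum>i\<in>{1..k}. if p^i dvd Suc n then 1 else 0) + (\<Sum>i\<in>{1..k}. n div p^i)"
    using Suc mult_Suc_sum[OF p] by simp
  also have "\<dots> = (\<Sum>i\<in>{1..k}. Suc n div p^i)"
    by (simp add: sum.distrib[symmetric] div_Suc_eq add.commute)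
  finally show ?case .
qed

lemma div_double_le: "2*n div (d::nat) \<le> 2*(n div d) + 1"
proof (cases "d = 0")
  case False
  have "n < (n div d + 1) * d" using False
    by (simp add: dividend_less_div_times)
  hence "2*n < (2*(n div d) + 2) * d" by (simp add: algebra_simps)
  hence "2*n div d < 2*(n div d) + 2" using False
    by (simp add: div_less_iff_less_mult)
  thus ?thesis by simp
qed simp

lemma double_div_le: "2*(n div (d::nat)) \<le> 2*n div d"
proof (cases "d = 0")
  case False
  have "d * (n div d) \<le> n" by (rule times_div_less_eq_dividend)
  hence "(2*(n div d))*d \<le> 2*n" by (simp add: algebra_simps)
  hence "((2*(n div d))*d) div d \<le> 2*n div d" by (rule div_le_mono)
  thus ?thesis using False by simp
qed simp

lemma mult_binom:
  fixes p n k :: nat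
  assumes p: "prime p" and lt: "2*n < p^k"
  shows "multiplicity p ((2*n) choose n) = (\<Sum>i\<in>{1..k}. 2*n div p^i - 2*(n div p^i))"
proof -
  have fl: "fact n * fact n * ((2*n) choose n) = (fact (2*n) :: nat)"
    using binomial_fact_lemma[of n "2*n"] by simp
  have nz: "(fact n :: nat) \<noteq> 0" "((2*n) choose n) \<noteq> 0" by simp_all
  have "multiplicity p (fact (2*n) :: nat) = multiplicity p (fact n * fact n :: nat) + multiplicity p ((2*n) choose n)"
    using p nz by (simp only: fl[symmetric]) (intro prime_elem_multiplicity_mult_distrib, simp_all)
  also have "multiplicity p (fact n * fact n :: nat) = 2 * multiplicity p (fact n :: nat)"
    using p nz by (simp add: prime_elem_multiplicity_mult_distrib)
  finally have e: "multiplicity p ((2*n) choose n) = multiplicity p (fact (2*n) :: nat) - 2 * multiplicity p (fact n :: nat)"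
    by simp
  have "n < p^k" using lt by simp
  hence "multiplicity p (fact n :: nat) = (\<Sum>i\<in>{1..k}. n div p^i)" by (rule legendre[OF p])
  moreover have "multiplicity p (fact (2*n) :: nat) = (\<Sum>i\<in>{1..k}. 2*n div p^i)" using lt by (rule legendre[OF p])
  ultimately have "multiplicity p ((2*n) choose n) = (\<Sum>i\<in>{1..k}. 2*n div p^i) - (\<Sum>i\<in>{1..k}. 2*(n div p^i))"
    using e by (simp add: sum_distrib_left)
  also have "\<dots> = (\<Sum>i\<in>{1..k}. 2*n div p^i - 2*(n div p^i))"
    by (rule sum_subtractf_nat[symmetric]) (simp add: double_div_le)
  finally show ?thesis .
qed

lemma exists_big_pow:
  fixes p n :: nat assumes "prime p" shows "n < p^n"
  using assms prime_gt_1_nat power_gt_expt by auto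

lemma binom_pow_le:
  fixes p n :: nat
  assumes p: "prime p" and n: "n > 0"
  shows "p ^ multiplicity p ((2*n) choose n) \<le> 2*n"
proof (rule ccontr)
  let ?j = "multiplicity p ((2*n) choose n)"
  let ?g = "\<lambda>i. 2*n div p^i - 2*(n div p^i)"
  assume "\<not> ?thesis"
  hence big: "2*n < p^?j" by simp
  have p1: "p > 1" using p prime_gt_1_nat by blast
  have k: "2*n < p^(2*n)" by (rule exists_big_pow[OF p])
  have eq: "?j = (\<Sum>i\<in>{1..2*n}. ?g i)" by (rule mult_binom[OF p k])
  have g1: "?g i \<le> (if i < ?j then 1 else 0)" for i
  proof (cases "i < ?j")
    case True then show ?thesis using div_double_le[of n "p^i"] by simp
  next
    case False
    hence "p^?j \<le> p^i" using p1 by (intro power_increasing) simp_all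
    hence "2*n < p^i" using big by simp
    then show ?thesis using False by simp
  qed
  have "?j \<le> (\<Sum>i\<in>{1..2*n}. (if i < ?j then 1 else 0))"
    using eq g1 by (simp only:) (rule sum_mono)
  also have "\<dots> = card {i\<in>{1..2*n}. i < ?j}"
    by (simp add: sum.inter_filter[symmetric])
  also have "\<dots> \<le> card {1..<?j}" by (intro card_mono) auto
  also have "\<dots> < ?j" using big n by (cases ?j) auto
  finally show False by simp
qed

lemma binom_mid_zero:
  fixes p n :: nat
  assumes p: "prime p" and pn: "p \<le> n" and h: "2*n < 3*p" and n4: "n \<ge> 4"
  shows "multiplicity p ((2*n) choose n) = 0"
proof -
  let ?g = "\<lambda>i. 2*n div p^i - 2*(n div p^i)"
  have k: "2*n < p^(2*n)" by (rule exists_big_pow[OF p])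
  have p3: "p \<ge> 3" using h n4 by linarith
  have psq: "2*n < p*p" using p3 h by (metis le_less_trans mult_le_mono1 mult.commute linorder_not_less order_le_less_trans) 
  have "?g i = 0" if i: "i \<in> {1..2*n}" for i
  proof (cases "i = 1")
    case True
    have "n div p = 1" using pn h by (simp add: div_nat_eqI)
    moreover have "2*n div p = 2" using pn h by (simp add: div_nat_eqI)
    ultimately show ?thesis using True by simp
  next
    case False
    hence "i \<ge> 2" using i by simp
    hence "p^2 \<le> p^i" using p3 by (intro power_increasing) simp_all
    hence "2*n < p^i" using psq by (simp add: power2_eq_square)
    thus ?thesis by simp
  qed
  thus ?thesis using mult_binom[OF p k] by simp
qed

lemma prod_primes_dvd:
  fixes N :: nat
  shows "finite S \<Longrightarrow> (\<forall>p\<in>S. prime p \<and> p dvd N) \<Longrightarrow> \<Prod>S dvd N"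
proof (induction S rule: finite_induct)
  case empty then show ?case by simp
next
  case (insert p S)
  have cop: "coprime p (\<Prod>S)"
  proof (rule prod_coprime_right)
    fix q assume q: "q \<in> S"
    have "q \<noteq> p" using q insert.hyps(2) by blast
    moreover have "prime q" using q insert.prems by simp
    moreover have "prime p" using insert.prems by simp
    ultimately show "coprime p q" using primes_coprime by blast
  qed
  have "p * \<Prod>S dvd N" using insert cop by (intro divides_mult) auto
  then show ?case using insert by simp
qed

definition primorial :: "nat \<Rightarrow> nat" where
  "primorial x = \<Prod>{p. prime p \<and> p \<le> x}"

lemma primorial_finite: "finite {p::nat. prime p \<and> p \<le> x}"
  by (rule finite_subset[of _ "{..x}"]) auto

lemma primorial_bound: "primorial x \<le> 4^x"
proof (induction x rule: less_induct)
  case (less x)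
  consider "x \<le> 1" | "x = 2" | "x > 2" "even x" | m where "x = 2*m+1" "m \<ge> 1"
  proof -
    have ex: "\<exists>m. x = 2*m+1 \<and> m \<ge> 1" if "x > 2" "odd x"
    proof -
      obtain m where m: "x = 2*m+1" using \<open>odd x\<close> by (rule oddE)
      have "m \<ge> 1" using m \<open>x > 2\<close> by simp
      thus ?thesis using m by blast
    qed
    show ?thesis
    proof (cases "x \<le> 1")
      case True then show ?thesis by (rule that(1))
    next
      case F1: False
      show ?thesis
      proof (cases "x = 2")
        case True then show ?thesis by (rule that(2))
      next
        case F2: False
        hence x2: "x > 2" using F1 by simp
        show ?thesis
        proof (cases "even x")
          case True then show ?thesis using x2 by (intro that(3))
        next
          case False
          then obtain m where "x = 2*m+1 \<and> m \<ge> 1" using ex x2 by blast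
          then show ?thesis by (intro that(4)) auto
        qed
      qed
    qed
  qed
  then show ?case
  proof cases
    case 1
    have "\<not>(prime p \<and> p \<le> x)" for p::nat using prime_ge_2_nat[of p] 1 by linarith
    hence e: "{p::nat. prime p \<and> p \<le> x} = {}" by blast
    show ?thesis unfolding primorial_def e by simp
  next
    case 2
    have "prime p \<and> p \<le> 2 \<longleftrightarrow> p = 2" for p::nat
    proof
      assume "prime p \<and> p \<le> 2" thus "p = 2" using prime_ge_2_nat[of p] by linarith
    qed simp
    hence e: "{p::nat. prime p \<and> p \<le> 2} = {2}" by blast
    show ?thesis unfolding primorial_def 2 e by simp
  next
    case 3
    hence "{p::nat. prime p \<and> p \<le> x} = {p. prime p \<and> p \<le> x - 1}"
  proof -
      have nx: "\<And>p. prime p \<Longrightarrow> p \<noteq> x" using prime_odd_nat 3 by blast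
      have "prime p \<and> p \<le> x \<longleftrightarrow> prime p \<and> p \<le> x - 1" for p
        using nx[of p] 3 by (cases "prime p") auto
      thus ?thesis by (intro Collect_cong)
    qed
    hence "primorial x = primorial (x-1)" by (simp add: primorial_def)
    also have "\<dots> \<le> 4^(x-1)" using less 3 by simp
    also have "\<dots> \<le> 4^x" by (intro power_increasing) simp_all
    finally show ?thesis .
  next
    case 4
    let ?A = "{p::nat. prime p \<and> p \<le> m+1}"
    let ?B = "{p::nat. prime p \<and> m+1 < p \<and> p \<le> 2*m+1}"
    have un: "{p::nat. prime p \<and> p \<le> x} = ?A \<union> ?B" using 4 by auto
    have fB: "finite ?B" by (rule finite_subset[of _ "{..2*m+1}"]) auto
    have "primorial x = \<Prod>?A * \<Prod>?B"
      unfolding primorial_def un by (rule prod.union_disjoint) (auto simp: primorial_finite fB)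
    also have "\<Prod>?A \<le> 4^(m+1)"
      using less[of "m+1"] 4 by (simp add: primorial_def)
    also have "\<Prod>?B \<le> 4^m"
    proof -
      have fl: "fact m * fact (m+1) * ((2*m+1) choose m) = (fact (2*m+1) :: nat)"
        using binomial_fact_lemma[of m "2*m+1"] by (simp add: Suc_diff_le)
      have "\<forall>p\<in>?B. prime p \<and> p dvd ((2*m+1) choose m)"
      proof
        fix p assume p: "p \<in> ?B"
        hence pp: "prime p" by simp
        have "p \<le> 2*m+1" "m < p" "m+1 < p" using p by auto
        have "p dvd (fact (2*m+1) :: nat)" using prime_dvd_fact_iff[OF pp] \<open>p \<le> 2*m+1\<close> by blast
        hence "p dvd fact m * fact (m+1) * ((2*m+1) choose m)" by (simp only: fl)
        moreover have "\<not> p dvd (fact m :: nat)" "\<not> p dvd (fact (m+1) :: nat)"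
          using prime_dvd_fact_iff[OF pp] \<open>m < p\<close> \<open>m+1 < p\<close> by (blast dest: leD)+
        ultimately show "prime p \<and> p dvd ((2*m+1) choose m)"
          using pp by (simp add: prime_dvd_mult_iff)
      qed
      hence "\<Prod>?B dvd ((2*m+1) choose m)" by (intro prod_primes_dvd fB)
      hence "\<Prod>?B \<le> ((2*m+1) choose m)" by (rule dvd_imp_le) simp
      also have "\<dots> \<le> 4^m" by (rule binom_odd_upper)
      finally show ?thesis .
    qed
    also have "4^(m+1) * 4^m = (4::nat)^x" using 4 by (simp add: power_add[symmetric])
    finally show ?thesis by simp
  qed
qed

lemma bertrand_big:
  fixes n :: nat
  assumes n: "n \<ge> 2048"
  shows "\<exists>p. prime p \<and> n < p \<and> p \<le> 2*n"
proof (rule ccontr)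
  assume nb: "\<not> ?thesis"
  define C where "C = (2*n) choose n"
  define PF where "PF = prime_factors C"
  define f where "f = (\<lambda>p. p ^ multiplicity p C)"
  have Cpos: "C > 0" unfolding C_def by simp
  have Cfl: "C dvd fact (2*n)"
  proof -
    have "fact n * fact n * C = (fact (2*n) :: nat)"
      using binomial_fact_lemma[of n "2*n"] unfolding C_def by simp
    thus ?thesis by (metis dvd_triv_right)
  qed
  have fPF: "finite PF" unfolding PF_def by simp
  have PFprop: "prime p \<and> 1 \<le> multiplicity p C \<and> 3*p \<le> 2*n" if p: "p \<in> PF" for p
  proof -
    have pp: "prime p" and pd: "p dvd C" using p Cpos unfolding PF_def by auto
    have m1: "1 \<le> multiplicity p C"
      using pp pd Cpos prime_multiplicity_gt_zero_iff[of p C] by simp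
    have "p dvd fact (2*n)" using pd Cfl by (rule dvd_trans)
    hence "p \<le> 2*n" using prime_dvd_fact_iff[OF pp] by blast
    hence pn: "p \<le> n" using nb pp by (meson not_le)
    have "3*p \<le> 2*n"
    proof (rule ccontr)
      assume "\<not> 3*p \<le> 2*n"
      hence "multiplicity p C = 0" unfolding C_def using pp pn n
        by (intro binom_mid_zero) simp_all
      thus False using m1 by simp
    qed
    thus ?thesis using pp m1 by simp
  qed
  obtain t where t1: "t*t \<le> 2*n" and t2: "2*n < (t+1)*(t+1)" using sqrt_exists by blast
  have t64: "t \<ge> 64"
  proof (rule ccontr)
    assume "\<not> t \<ge> 64"
    hence "(t+1)*(t+1) \<le> 64*64" by (intro mult_le_mono) simp_all
    thus False using t2 n by simp
  qed
  let ?A = "PF \<inter> {p. p*p \<le> 2*n}"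
  let ?B = "PF - {p. p*p \<le> 2*n}"
  have "C = (\<Prod>p\<in>PF. f p)" unfolding f_def PF_def using prime_factorization_nat[OF Cpos] .
  also have "\<dots> = (\<Prod>p\<in>?A. f p) * (\<Prod>p\<in>?B. f p)" by (rule prod.Int_Diff[OF fPF])
  finally have Csplit: "C = (\<Prod>p\<in>?A. f p) * (\<Prod>p\<in>?B. f p)" .
  have Abound: "(\<Prod>p\<in>?A. f p) \<le> (2*n)^t"
  proof -
    have "(\<Prod>p\<in>?A. f p) \<le> (\<Prod>p\<in>?A. 2*n)"
    proof (rule prod_mono)
      fix p assume "p \<in> ?A"
      hence "prime p" using PFprop by auto
      thus "0 \<le> f p \<and> f p \<le> 2*n" unfolding f_def C_def using binom_pow_le n by simp
    qed
    also have "\<dots> = (2*n)^card ?A" by simp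
    also have "\<dots> \<le> (2*n)^t"
    proof (rule power_increasing)
      have "?A \<subseteq> {1..t}"
      proof
        fix p assume p: "p \<in> ?A"
        hence "prime p" using PFprop by auto
        hence "p \<ge> 1" using prime_ge_1_nat by blast
        moreover have "p \<le> t"
        proof (rule ccontr)
          assume "\<not> p \<le> t"
          hence "(t+1)*(t+1) \<le> p*p" by (intro mult_le_mono) simp_all
          thus False using p t2 by simp
        qed
        ultimately show "p \<in> {1..t}" by simp
      qed
      hence "card ?A \<le> card {1..t}" by (intro card_mono) simp_all
      thus "card ?A \<le> t" by simp
    qed (use n in simp)
    finally show ?thesis .
  qed
  have Bbound: "(\<Prod>p\<in>?B. f p) \<le> 4^(2*n div 3)"
  proof -
    have "(\<Prod>p\<in>?B. f p) = (\<Prod>p\<in>?B. p)"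
    proof (rule prod.cong)
      fix p assume p: "p \<in> ?B"
      hence pp: "prime p" and m1: "1 \<le> multiplicity p C" using PFprop by auto
      have "p ^ multiplicity p C \<le> 2*n" unfolding C_def using binom_pow_le pp n by simp
      also have "2*n < p^2" using p by (simp add: power2_eq_square)
      finally have "multiplicity p C < 2"
        using power_less_imp_less_exp[of p] prime_gt_1_nat[OF pp] by blast
      hence "multiplicity p C = 1" using m1 by simp
      thus "f p = p" unfolding f_def by simp
    qed simp
    also have "\<dots> \<le> primorial (2*n div 3)"
    proof -
      have "?B \<subseteq> {p. prime p \<and> p \<le> 2*n div 3}"
      proof
        fix p assume "p \<in> ?B"
        hence "prime p" "3*p \<le> 2*n" using PFprop by auto
        moreover have "p \<le> 2*n div 3" using \<open>3*p \<le> 2*n\<close> by presburger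
        ultimately show "p \<in> {p. prime p \<and> p \<le> 2*n div 3}" by simp
      qed
      hence "(\<Prod>p\<in>?B. p) dvd primorial (2*n div 3)"
        unfolding primorial_def by (intro prod_dvd_prod_subset primorial_finite)
      moreover have "primorial (2*n div 3) > 0" unfolding primorial_def
        using primorial_finite by (intro prod_pos) (auto dest: prime_gt_0_nat)
      ultimately show ?thesis by (rule dvd_imp_le)
    qed
    also have "\<dots> \<le> 4^(2*n div 3)" by (rule primorial_bound)
    finally show ?thesis .
  qed
  define X where "X = (2*n+1)*(2*n)^t"
  define y where "y = 2*n div 3"
  have "4^n \<le> (2*n+1) * C" unfolding C_def by (rule central_lower)
  also have "\<dots> \<le> (2*n+1) * ((2*n)^t * 4^y)"
    unfolding Csplit y_def by (intro mult_le_mono Abound Bbound order_refl)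
  also have "\<dots> = X * 4^y" unfolding X_def by (simp only: mult.assoc)
  finally have h1: "4^n \<le> X * 4^y" .
  hence "(4^n)^3 \<le> (X*4^y)^3" by (rule power_mono) simp
  also have "\<dots> = X^3 * 4^(3*y)" by (simp add: power_mult_distrib power_mult[symmetric] mult.commute)
  also have "\<dots> \<le> X^3 * 4^(2*n)"
  proof -
    have "3*y \<le> 2*n" unfolding y_def by presburger
    thus ?thesis by (intro mult_le_mono2 power_increasing) simp_all
  qed
  finally have "4^n * 4^(2*n) \<le> X^3 * 4^(2*n)"
    by (simp add: power_mult[symmetric] power_add[symmetric] mult.commute)
  hence h2: "4^n \<le> X^3" by simp
  hence "(4^n)^8 \<le> (X^3)^8" by (rule power_mono) simp
  moreover have "(X^3)^8 = X^24" by (simp add: power_mult[symmetric])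
  moreover have "X^24 = (2*n+1)^24 * ((2*n)^t)^24" unfolding X_def by (rule power_mult_distrib)
  moreover have "((2*n)^t)^24 = (2*n)^(24*t)" by (simp only: power_mult[symmetric] mult.commute)
  moreover have "((4::nat)^n)^8 = 4^(8*n)" by (simp only: power_mult[symmetric] mult.commute)
  ultimately have "4^(8*n) \<le> (2*n+1)^24 * (2*n)^(24*t)" by simp
  thus False using numerics[OF t64 t1 t2] by simp
qed

function pcheck :: "nat \<Rightarrow> nat \<Rightarrow> bool" where
  "pcheck p d = (if p < d*d \<or> d = 0 then True else (p mod d \<noteq> 0 \<and> pcheck p (Suc d)))"
  by auto
lemma sq_ge: "0 < (d::nat) \<Longrightarrow> d \<le> d*d" by simp

termination
proof (relation "measure (\<lambda>(p,d). Suc p - d)")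
  fix p d :: nat assume "\<not> (p < d*d \<or> d = 0)"
  hence "d \<le> p" using sq_ge[of d] by linarith
  thus "((p, Suc d), p, d) \<in> measure (\<lambda>(p,d). Suc p - d)" by simp
qed simp

lemma pcheck_sound: "pcheck p d \<Longrightarrow> d \<le> k \<Longrightarrow> 0 < d \<Longrightarrow> k*k \<le> p \<Longrightarrow> \<not> k dvd p"
proof (induction p d rule: pcheck.induct)
  case (1 p d)
  have "d*d \<le> k*k" using "1.prems" by (intro mult_le_mono) simp_all
  hence "\<not> p < d*d" using "1.prems" by linarith
  hence c: "p mod d \<noteq> 0" "pcheck p (Suc d)" using "1.prems" by (simp_all del: pcheck.simps add: pcheck.simps[of p d])
  show ?case
  proof (cases "k = d")
    case True then show ?thesis using c by (simp add: dvd_eq_mod_eq_0)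
  next
    case False
    hence "Suc d \<le> k" using "1.prems" by simp
    thus ?thesis using "1.IH" \<open>\<not> p < d*d\<close> "1.prems" c by simp
  qed
qed

lemma prime_by_check:
  fixes p :: nat
  assumes p1: "1 < p" and c: "pcheck p 2"
  shows "prime p"
proof (rule ccontr)
  assume "\<not> prime p"
  then obtain a where a: "a dvd p" "a \<noteq> 1" "a \<noteq> p" using p1 prime_nat_iff by auto
  then obtain b where b: "p = a*b" by blast
  have "a*b \<noteq> 0" using b p1 by (metis not_one_less_zero)
  hence "a \<noteq> 0" "b \<noteq> 0" by simp_all
  moreover have "b \<noteq> 1" using b a(3) by auto
  ultimately have a2: "a \<ge> 2" "b \<ge> 2" using a(2) by auto
  show False
  proof (cases "a \<le> b")
    case True
    hence "a*a \<le> p" using b by simp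
    thus False using pcheck_sound[OF c, of a] a2 a by simp
  next
    case False
    hence "b*b \<le> p" using b by simp
    moreover have "b dvd p" using b by simp
    ultimately show False using pcheck_sound[OF c, of b] a2 by simp
  qed
qed

definition bert_ok :: "nat \<Rightarrow> bool" where
  "bert_ok a \<longleftrightarrow> (\<forall>n. 1 \<le> n \<and> n < a \<longrightarrow> (\<exists>p. prime p \<and> n < p \<and> p \<le> 2*n))"

lemma bert_ok_step:
  assumes "prime q" "q \<le> 2*a" "bert_ok a"
  shows "bert_ok q"
  unfolding bert_ok_def
proof (intro allI impI)
  fix n :: nat assume n: "1 \<le> n \<and> n < q"
  show "\<exists>p. prime p \<and> n < p \<and> p \<le> 2*n"
  proof (cases "n < a")
    case True then show ?thesis using assms(3) n unfolding bert_ok_def by blast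
  next
    case False
    hence "n < q" "q \<le> 2*n" using n assms(2) by linarith+
    thus ?thesis using assms(1) by blast
  qed
qed

lemma bert_ok_2: "bert_ok 2"
  unfolding bert_ok_def
proof (intro allI impI)
  fix n :: nat assume "1 \<le> n \<and> n < 2"
  hence "n = 1" by simp
  moreover have "prime (2::nat)" by simp
  ultimately show "\<exists>p. prime p \<and> n < p \<and> p \<le> 2*n" by (intro exI[of _ 2]) simp
qed

lemma bert_ok_2503: "bert_ok 2503"
proof -
  have b3: "bert_ok 3" by (rule bert_ok_step[OF prime_by_check _ bert_ok_2]) simp_all
  have b5: "bert_ok 5" by (rule bert_ok_step[OF prime_by_check _ b3]) simp_all
  have b7: "bert_ok 7" by (rule bert_ok_step[OF prime_by_check _ b5]) simp_all
  have b13: "bert_ok 13" by (rule bert_ok_step[OF prime_by_check _ b7]) simp_all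
  have b23: "bert_ok 23" by (rule bert_ok_step[OF prime_by_check _ b13]) simp_all
  have b43: "bert_ok 43" by (rule bert_ok_step[OF prime_by_check _ b23]) simp_all
  have b83: "bert_ok 83" by (rule bert_ok_step[OF prime_by_check _ b43]) simp_all
  have b163: "bert_ok 163" by (rule bert_ok_step[OF prime_by_check _ b83]) simp_all
  have b317: "bert_ok 317" by (rule bert_ok_step[OF prime_by_check _ b163]) simp_all
  have b631: "bert_ok 631" by (rule bert_ok_step[OF prime_by_check _ b317]) simp_all
  have b1259: "bert_ok 1259" by (rule bert_ok_step[OF prime_by_check _ b631]) simp_all
  have b2503: "bert_ok 2503" by (rule bert_ok_step[OF prime_by_check _ b1259]) simp_all
  show ?thesis by (rule b2503)
qed

lemma bertrand:
  fixes n :: nat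
  assumes n: "n \<ge> 1"
  shows "\<exists>p. prime p \<and> n < p \<and> p \<le> 2*n"
proof (cases "n \<ge> 2048")
  case True then show ?thesis by (rule bertrand_big)
next
  case False
  thus ?thesis using bert_ok_2503 n unfolding bert_ok_def by simp
qed

lemma delta_set_finite:
  "finite {r + s | r s. 0 < r \<and> 0 < s \<and> r \<le> s \<and> r * s = (m::nat)}"
proof (rule finite_subset[of _ "{..2*m}"])
  show "{r + s | r s. 0 < r \<and> 0 < s \<and> r \<le> s \<and> r * s = m} \<subseteq> {..2*m}"
  proof
    fix x assume "x \<in> {r + s | r s. 0 < r \<and> 0 < s \<and> r \<le> s \<and> r * s = m}"
    then obtain r s where rs: "x = r + s" "0 < r" "0 < s" "r * s = m" by blast
    have "r \<le> m" using rs by (metis dvd_imp_le dvd_triv_left gr0I mult_is_0)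
    moreover have "s \<le> m" using rs by (metis dvd_imp_le dvd_triv_right gr0I mult_is_0)
    ultimately show "x \<in> {..2*m}" using rs by simp
  qed
qed simp

lemma delta_le_pair:
  fixes a b n :: nat
  assumes "0 < a" "0 < b" "a \<le> b" "a * b = n"
  shows "delta n \<le> a + b"
  unfolding delta_def
  by (rule Min_le[OF delta_set_finite]) (use assms in blast)

lemma delta_le: "0 < m \<Longrightarrow> delta m \<le> m + 1"
  using delta_le_pair[of 1 m m] by simp

lemma delta_prime:
  fixes q :: nat assumes q: "prime q"
  shows "delta q = q + 1"
proof -
  have "{r + s | r s. 0 < r \<and> 0 < s \<and> r \<le> s \<and> r * s = q} = {q + 1}"
  proof
    show "{q + 1} \<subseteq> {r + s | r s. 0 < r \<and> 0 < s \<and> r \<le> s \<and> r * s = q}"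
    proof -
      have "q + 1 = 1 + q \<and> 0 < (1::nat) \<and> 0 < q \<and> 1 \<le> q \<and> 1 * q = q"
        using prime_gt_0_nat[OF q] by simp
      thus ?thesis by blast
    qed
  next
    show "{r + s | r s. 0 < r \<and> 0 < s \<and> r \<le> s \<and> r * s = q} \<subseteq> {q + 1}"
    proof
      fix x assume "x \<in> {r + s | r s. 0 < r \<and> 0 < s \<and> r \<le> s \<and> r * s = q}"
      then obtain r s where rs: "x = r + s" "0 < r" "0 < s" "r \<le> s" "r * s = q" by blast
      have "r dvd q" using rs by (metis dvd_triv_left)
      hence "r = 1 \<or> r = q" using q prime_nat_iff by blast
      thus "x \<in> {q + 1}"
      proof
        assume "r = 1" thus ?thesis using rs by simp
      next
        assume "r = q"
        hence "s = 1" using rs q prime_gt_0_nat[OF q] by simp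
        hence "q \<le> 1" using rs \<open>r = q\<close> by simp
        thus ?thesis using prime_gt_1_nat[OF q] by simp
      qed
    qed
  qed
  thus ?thesis unfolding delta_def by simp
qed

lemma two_sum_le:
  fixes a b :: nat assumes "2 \<le> a" "2 \<le> b" shows "2*(a+b) \<le> a*b + 4"
proof -
  obtain a' b' where "a = a'+2" "b = b'+2" using assms
    by (metis add.commute le_add_diff_inverse)
  thus ?thesis by (simp add: algebra_simps)
qed

theorem proposition5p1:
  fixes n :: nat
  assumes "0 < n"
  shows "(\<forall>m. 0 < m \<and> m < n \<longrightarrow> delta m < delta n) \<longleftrightarrow> (n = 1 \<or> prime n)"
proof
  assume "n = 1 \<or> prime n"
  thus "\<forall>m. 0 < m \<and> m < n \<longrightarrow> delta m < delta n"
  proof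
    assume "n = 1" thus ?thesis by simp
  next
    assume p: "prime n"
    show ?thesis
    proof (intro allI impI)
      fix m assume m: "0 < m \<and> m < n"
      have "delta m \<le> m + 1" using m delta_le by simp
      also have "\<dots> < n + 1" using m by simp
      also have "\<dots> = delta n" using delta_prime[OF p] by simp
      finally show "delta m < delta n" .
    qed
  qed
next
  assume all: "\<forall>m. 0 < m \<and> m < n \<longrightarrow> delta m < delta n"
  show "n = 1 \<or> prime n"
  proof (rule ccontr)
    assume np: "\<not> (n = 1 \<or> prime n)"
    hence n2: "n \<ge> 2" using assms by simp
    then obtain d where d: "d dvd n" "d \<noteq> 1" "d \<noteq> n" using np prime_nat_iff by auto
    then obtain e where e: "n = d * e" by blast
    have "d*e \<noteq> 0" using e assms by simp
    hence "d \<noteq> 0" "e \<noteq> 0" by simp_all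
    moreover have "e \<noteq> 1" using e d(3) by auto
    ultimately have de2: "d \<ge> 2" "e \<ge> 2" using d(2) by auto
    define a where "a = min d e"
    define b where "b = max d e"
    have ab: "a \<ge> 2" "b \<ge> 2" "a \<le> b" "a * b = n"
      using de2 e unfolding a_def b_def by (auto simp: min_def max_def)
    have dn: "delta n \<le> a + b" using ab by (intro delta_le_pair) simp_all
    have s: "2*(a+b) \<le> n + 4" using two_sum_le[OF ab(1,2)] ab(4) by simp
    define k where "k = n div 2"
    have k1: "k \<ge> 1" using n2 unfolding k_def by simp
    have kn: "2*k \<le> n" "n \<le> 2*k+1" unfolding k_def by simp_all
    obtain q where q: "prime q" "k < q" "q \<le> 2*k" using bertrand[OF k1] by blast
    have "q \<noteq> n" using q np by auto
    hence qn: "0 < q \<and> q < n" using q kn by simp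
    have "delta q = q + 1" by (rule delta_prime[OF q(1)])
    moreover have "delta q < delta n" using all qn by blast
    moreover have "a + b \<le> k + 2" using s kn by presburger
    ultimately show False using dn q by linarith
  qed
qed

end
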